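(* Let $n\in\mathbb{N}$, let $I$ be a closed interval, and let $f_j\in\mathscr{E}'(I)$ for $j\in\mathbb{Z}_n$. Then there exists $\alpha\in\mathbb{C}$ with $\alpha^n=1$ such that \[ \inf\mathop{\rm supp}\sum_{j\in\mathbb{Z}_n}\alpha^j f_j=\min_{j\in\mathbb{Z}_n}\inf\mathop{\rm supp} f_j . \]
   Context: $\mathbb{Z}_n=\mathbb{Z}\bmod n$. $\mathscr{E}'(I)$ denotes distributions on $\mathbb{R}$ supported in $I$ (equivalently, for an interval of $\mathbb{T}$ identified with a lifted interval of $\mathbb{R}$). *)

theory Defs
  imports "HOL-Analysis.Analysis"
begin

fun nth_deriv :: "nat \<Rightarrow> (real \<Rightarrow> complex) \<Rightarrow> real \<Rightarrow> complex" where
  "nth_deriv 0 \<phi> = \<phi>"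
| "nth_deriv (Suc k) \<phi> = (\<lambda>x. vector_derivative (nth_deriv k \<phi>) (at x))"

definition smooth_fun :: "(real \<Rightarrow> complex) \<Rightarrow> bool" where
  "smooth_fun \<phi> \<longleftrightarrow>
     (\<forall>k x. (nth_deriv k \<phi> has_vector_derivative nth_deriv (Suc k) \<phi> x) (at x))"

definition tsupport :: "(real \<Rightarrow> complex) \<Rightarrow> real set" where
  "tsupport \<phi> = closure {x. \<phi> x \<noteq> 0}"

definition test_fun :: "(real \<Rightarrow> complex) \<Rightarrow> bool" where
  "test_fun \<phi> \<longleftrightarrow> smooth_fun \<phi> \<and> compact (tsupport \<phi>)"

text \<open>Distributions on the real line: linear functionals on test functions which are
  continuous, i.e. bounded on each compact set by finitely many sup-seminorms of derivatives.\<close>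
definition distribution :: "((real \<Rightarrow> complex) \<Rightarrow> complex) \<Rightarrow> bool" where
  "distribution T \<longleftrightarrow>
     (\<forall>\<phi> \<psi> a b. test_fun \<phi> \<longrightarrow> test_fun \<psi> \<longrightarrow>
        T (\<lambda>x. a * \<phi> x + b * \<psi> x) = a * T \<phi> + b * T \<psi>) \<and>
     (\<forall>K. compact K \<longrightarrow> (\<exists>C N. \<forall>\<phi>. test_fun \<phi> \<longrightarrow> tsupport \<phi> \<subseteq> K \<longrightarrow>
        norm (T \<phi>) \<le> C * (\<Sum>k\<le>N. Sup (range (\<lambda>x. norm (nth_deriv k \<phi> x))))))"

definition dsupp :: "((real \<Rightarrow> complex) \<Rightarrow> complex) \<Rightarrow> real set" where
  "dsupp T = - {x. \<exists>e>0. \<forall>\<phi>. test_fun \<phi> \<longrightarrow> tsupport \<phi> \<subseteq> ball x e \<longrightarrow> T \<phi> = 0}"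

definition cs_distributions :: "real set \<Rightarrow> ((real \<Rightarrow> complex) \<Rightarrow> complex) set" where
  "cs_distributions I = {T. distribution T \<and> compact (dsupp T) \<and> dsupp T \<subseteq> I}"

text \<open>Infimum of the support, in the extended reals (\<open>+\<infinity>\<close> for the zero distribution).\<close>
definition inf_supp :: "((real \<Rightarrow> complex) \<Rightarrow> complex) \<Rightarrow> ereal" where
  "inf_supp T = Inf (ereal ` dsupp T)"

end

theory Submission
  imports Defs
begin

lemma not_in_dsupp_iff:
  "x \<notin> dsupp T \<longleftrightarrow> (\<exists>e>0. \<forall>\<phi>. test_fun \<phi> \<longrightarrow> tsupport \<phi> \<subseteq> ball x e \<longrightarrow> T \<phi> = 0)"
  unfolding dsupp_def by (simp; meson)

lemma not_in_dsupp_finite: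
  assumes "finite J" "\<And>j. j \<in> J \<Longrightarrow> x \<notin> dsupp (h j)"
  shows "\<exists>e>0. \<forall>j\<in>J. \<forall>\<phi>. test_fun \<phi> \<longrightarrow> tsupport \<phi> \<subseteq> ball x e \<longrightarrow> h j \<phi> = 0"
proof -
  have "\<forall>j\<in>J. \<exists>e>0. \<forall>\<phi>. test_fun \<phi> \<longrightarrow> tsupport \<phi> \<subseteq> ball x e \<longrightarrow> h j \<phi> = 0"
    using assms(2) by (simp add: not_in_dsupp_iff)
  then obtain E where E: "\<And>j. j \<in> J \<Longrightarrow> E j > 0 \<and> (\<forall>\<phi>. test_fun \<phi> \<longrightarrow> tsupport \<phi> \<subseteq> ball x (E j) \<longrightarrow> h j \<phi> = 0)"
    by metis
  define e where "e = Min (insert 1 (E ` J))"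
  have fin: "finite (insert 1 (E ` J))" using assms(1) by simp
  have "e > 0" unfolding e_def using fin E by (subst Min_gr_iff) auto
  moreover have le: "\<And>j. j \<in> J \<Longrightarrow> e \<le> E j" unfolding e_def using fin by (intro Min_le) auto
  moreover have "\<forall>j\<in>J. \<forall>\<phi>. test_fun \<phi> \<longrightarrow> tsupport \<phi> \<subseteq> ball x e \<longrightarrow> h j \<phi> = 0"
  proof (intro ballI allI impI)
    fix j \<phi> assume j: "j \<in> J" and \<phi>: "test_fun \<phi>" "tsupport \<phi> \<subseteq> ball x e"
    have "ball x e \<subseteq> ball x (E j)" using le[OF j] by (rule subset_ball)
    then show "h j \<phi> = 0" using E[OF j] \<phi> by blast
  qed
  ultimately show ?thesis by blast
qed

lemma dsupp_sum:
  fixes n :: nat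
  shows "dsupp (\<lambda>\<phi>. \<Sum>j<n. c j * f j \<phi>) \<subseteq> (\<Union>j<n. dsupp (f j))"
proof
  fix x assume x: "x \<in> dsupp (\<lambda>\<phi>. \<Sum>j<n. c j * f j \<phi>)"
  show "x \<in> (\<Union>j<n. dsupp (f j))"
  proof (rule ccontr)
    assume "x \<notin> (\<Union>j<n. dsupp (f j))"
    then have "\<exists>e>0. \<forall>j\<in>{..<n}. \<forall>\<phi>. test_fun \<phi> \<longrightarrow> tsupport \<phi> \<subseteq> ball x e \<longrightarrow> f j \<phi> = 0"
      by (intro not_in_dsupp_finite) auto
    then obtain e where e: "e > 0" "\<forall>j\<in>{..<n}. \<forall>\<phi>. test_fun \<phi> \<longrightarrow> tsupport \<phi> \<subseteq> ball x e \<longrightarrow> f j \<phi> = 0"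
      by blast
    then have "x \<notin> dsupp (\<lambda>\<phi>. \<Sum>j<n. c j * f j \<phi>)"
      unfolding not_in_dsupp_iff by (intro exI[of _ e]) auto
    with x show False by simp
  qed
qed

lemma Inf_ereal_min:
  assumes "x0 \<in> S" "\<And>s. s \<in> S \<Longrightarrow> x0 \<le> s"
  shows "Inf (ereal ` S) = ereal x0"
  by (rule Inf_eqI) (use assms in \<open>auto intro: Inf_lower\<close>)

definition omg :: "nat \<Rightarrow> complex" where
  "omg n = exp (2 * of_real pi * \<i> / of_nat n)"

lemma omg_pow: "omg n ^ d = exp (2 * of_real pi * \<i> * of_nat d / of_nat n)"
proof -
  have "omg n ^ d = exp (of_nat d * (2 * of_real pi * \<i> / of_nat n))"
    unfolding omg_def by (rule exp_of_nat_mult[symmetric])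
  also have "of_nat d * (2 * of_real pi * \<i> / of_nat n) = 2 * of_real pi * \<i> * of_nat d / (of_nat n::complex)"
    by (simp add: field_simps)
  finally show ?thesis .
qed

lemma omg_n: "n \<ge> 1 \<Longrightarrow> omg n ^ n = 1"
  using complex_root_unity[of n 1] unfolding omg_pow by simp
lemma orth:
  assumes n: "n \<ge> 1" and l: "l < n" and j: "j < n"
  shows "(\<Sum>k<n. (omg n ^ (l + (n - j))) ^ k) = (if l = j then of_nat n else 0)"
proof (cases "l = j")
  case True
  then have "omg n ^ (l + (n - j)) = 1" using j n omg_n by simp
  then show ?thesis using True by simp
next
  case False
  have "\<not> n dvd (l + (n - j))"
  proof
    assume "n dvd (l + (n - j))"
    then obtain q where q: "l + (n - j) = n * q" by (erule dvdE)
    have b1: "0 < l + (n - j)" "l + (n - j) < n * 2" using l j by auto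
    have b: "0 < n * q" "n * q < n * 2" using b1 unfolding q .
    then have "0 < q" "q < 2" by simp_all
    then have "q = 1" by simp
    then have "l + (n - j) = n" using q by simp
    with False l j show False by auto
  qed
  then have ne: "omg n ^ (l + (n - j)) \<noteq> 1"
    using complex_root_unity_eq_1[OF n, of "l + (n - j)"] by (simp add: omg_pow)
  have "(omg n ^ (l + (n - j))) ^ n = 1"
    by (metis omg_n[OF n] power_mult mult.commute power_one)
  then show ?thesis using ne False by (simp add: geometric_sum)
qed

lemma inversion:
  assumes n: "n \<ge> 1" and j: "j < n"
  shows "(\<Sum>k<n. (omg n ^ (n - j)) ^ k * (\<Sum>l<n. (omg n ^ k) ^ l * f l)) = of_nat n * f j"
proof -
  have "(\<Sum>k<n. (omg n ^ (n - j)) ^ k * (\<Sum>l<n. (omg n ^ k) ^ l * f l))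
      = (\<Sum>k<n. \<Sum>l<n. (omg n ^ (l + (n - j))) ^ k * f l)"
    unfolding sum_distrib_left
    by (intro sum.cong refl) (simp add: power_add power_mult_distrib flip: power_mult,
        simp add: mult.commute)
  also have "\<dots> = (\<Sum>l<n. (\<Sum>k<n. (omg n ^ (l + (n - j))) ^ k) * f l)"
    by (subst sum.swap) (simp add: sum_distrib_right)
  also have "\<dots> = (\<Sum>l<n. (if l = j then of_nat n * f l else 0))"
    using orth[OF n _ j] by (intro sum.cong) auto
  also have "\<dots> = of_nat n * f j" using j by simp
  finally show ?thesis .
qed

theorem lemma1:
  fixes n :: nat and I :: "real set" and f :: "nat \<Rightarrow> (real \<Rightarrow> complex) \<Rightarrow> complex"
  assumes "n \<ge> 1"
    and "is_interval I" and "closed I"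
    and "\<And>j. j < n \<Longrightarrow> f j \<in> cs_distributions I"
  shows "\<exists>\<alpha>::complex. \<alpha> ^ n = 1 \<and>
           inf_supp (\<lambda>\<phi>. \<Sum>j<n. \<alpha> ^ j * f j \<phi>) = (MIN j\<in>{..<n}. inf_supp (f j))"
proof -
  have n0: "n > 0" using assms(1) by simp
  have fin: "finite (inf_supp ` f ` {..<n})" by simp
  have ne: "inf_supp ` f ` {..<n} \<noteq> {}" using n0 by auto
  define M where "M = (MIN j\<in>{..<n}. inf_supp (f j))"
  have Mle: "\<And>j. j < n \<Longrightarrow> M \<le> inf_supp (f j)"
    unfolding M_def by (intro Min_le) auto
  obtain j0 where j0: "j0 < n" "inf_supp (f j0) = M"
    using Min_in[OF _ ne] unfolding M_def by (auto simp: image_image)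
  show ?thesis
  proof (cases "dsupp (f j0) = {}")
    case True
    have "\<And>j. j < n \<Longrightarrow> dsupp (f j) = {}"
    proof (rule ccontr)
      fix j assume j: "j < n" "dsupp (f j) \<noteq> {}"
      then obtain s where s: "s \<in> dsupp (f j)" by auto
      have "M \<le> inf_supp (f j)" using Mle j by simp
      also have "\<dots> \<le> ereal s" unfolding inf_supp_def using s by (intro Inf_lower) auto
      finally have "M \<le> ereal s" .
      moreover have "M = \<infinity>" using j0 True by (simp add: inf_supp_def top_ereal_def)
      ultimately show False by simp
    qed
    then have "dsupp (\<lambda>\<phi>. \<Sum>j<n. 1 ^ j * f j \<phi>) = {}"
      using dsupp_sum[where n=n and c="\<lambda>j. 1 ^ j" and f=f] by auto
    then have "inf_supp (\<lambda>\<phi>. \<Sum>j<n. 1 ^ j * f j \<phi>) = M"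
      using j0 True by (simp add: inf_supp_def)
    then show ?thesis unfolding M_def by (intro exI[of _ 1]) simp
  next
    case False
    have "compact (dsupp (f j0))" using assms(4)[OF j0(1)] by (simp add: cs_distributions_def)
    then obtain x0 where x0: "x0 \<in> dsupp (f j0)" "\<And>y. y \<in> dsupp (f j0) \<Longrightarrow> x0 \<le> y"
      using compact_attains_inf[OF _ False] by blast
    have Mx0: "M = ereal x0" using j0(2) Inf_ereal_min[OF x0] by (simp add: inf_supp_def)
    define g where "g k = (\<lambda>\<phi>. \<Sum>l<n. (omg n ^ k) ^ l * f l \<phi>)" for k
    have "\<exists>k<n. x0 \<in> dsupp (g k)"
    proof (rule ccontr)
      assume "\<not> (\<exists>k<n. x0 \<in> dsupp (g k))"
      then have "\<exists>e>0. \<forall>k\<in>{..<n}. \<forall>\<phi>. test_fun \<phi> \<longrightarrow> tsupport \<phi> \<subseteq> ball x0 e \<longrightarrow> g k \<phi> = 0"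
        by (intro not_in_dsupp_finite) auto
      then obtain e where e: "e > 0" "\<forall>k\<in>{..<n}. \<forall>\<phi>. test_fun \<phi> \<longrightarrow> tsupport \<phi> \<subseteq> ball x0 e \<longrightarrow> g k \<phi> = 0"
        by blast
      have "x0 \<notin> dsupp (f j0)"
        unfolding not_in_dsupp_iff
      proof (intro exI[of _ e] conjI allI impI)
        fix \<phi> assume \<phi>: "test_fun \<phi>" "tsupport \<phi> \<subseteq> ball x0 e"
        have "of_nat n * f j0 \<phi> = (\<Sum>k<n. (omg n ^ (n - j0)) ^ k * g k \<phi>)"
          using inversion[OF assms(1) j0(1), of "\<lambda>l. f l \<phi>"] unfolding g_def by simp
        also have "\<dots> = 0" using e \<phi> by simp
        finally show "f j0 \<phi> = 0" using n0 by simp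
      qed (use e in auto)
      with x0 show False by simp
    qed
    then obtain k where k: "k < n" "x0 \<in> dsupp (g k)" by auto
    have "inf_supp (g k) = ereal x0"
      unfolding inf_supp_def
    proof (rule Inf_ereal_min[OF k(2)])
      fix s assume "s \<in> dsupp (g k)"
      then obtain j where j: "j < n" "s \<in> dsupp (f j)"
        using dsupp_sum[where n=n and c="\<lambda>l. (omg n ^ k) ^ l" and f=f] unfolding g_def by auto
      have "ereal x0 = M" using Mx0 by simp
      also have "\<dots> \<le> inf_supp (f j)" using Mle j by simp
      also have "\<dots> \<le> ereal s" unfolding inf_supp_def using j by (intro Inf_lower) auto
      finally show "x0 \<le> s" by simp
    qed
    moreover have "(omg n ^ k) ^ n = 1"
      by (metis omg_n[OF assms(1)] power_mult mult.commute power_one)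
    ultimately show ?thesis unfolding g_def M_def[symmetric] using Mx0
      by (intro exI[of _ "omg n ^ k"]) simp
  qed
qed

end
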